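(* There exist regular (up to a charged thin shell) spherically symmetric, asymptotically flat, non-time-symmetric and non-maximal initial data satisfying the dominant energy condition, with a ball $\mathcal{B}$ of area radius $\mathcal{R}$ outside which the data are electrovacuum with charge $Q$ and mass $M>|Q|$, having a horizon outside $\mathcal{B}$ of area radius $r_+=M+\sqrt{M^2-Q^2}$, and such that $2\mathcal{R}<|Q|$. In particular, inequality $2\mathcal{R}>|Q|$ can fail for a ball lying inside a horizon.
   Context: Spherically symmetric data: metric $dl^2+r(l)^2(d\theta^2+\sin^2\theta d\phi^2)$, second fundamental form $K_{ij}=n_in_jK_l+(h_{ij}-n_in_j)K_r$, $n=\partial_l$, trace $K=K_l+2K_r$ (maximal means $K=0$; time-symmetric means $K_{ij}=0$). Null expansions $\theta^\pm=\frac2r(r'\pm K_rr)$; a horizon is the outer boundary of a trapped region ($\theta^+\theta^-<0$) and satisfies $\theta^+\theta^-=0$. Asymptotic flatness: $h_{ij}=\delta_{ij}+O(r^{-1})$, $K_{ij}=O(r^{-2})$ with the corresponding derivative falloffs. Electrovacuum: only matter is the electric field $E=Q/r^2$. *)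

theory Defs
  imports "HOL-Analysis.Analysis"
begin

text \<open>
Spherically symmetric initial data: metric dl^2 + r(l)^2 dOmega^2,
second fundamental form K = K_l n n + K_r (h - n n), radial electric field E n.
The data are regular up to a single thin shell at l = ls: each quantity is given
on [0,ls] by a smooth function (index 1) and on [ls,oo) by a smooth function
(index 2); the pieces of r agree at ls (continuous metric).  A data "piece"
is a quadruple (r, K_l, K_r, E) of real functions of l.
\<close>

definition smooth_fun :: "(real \<Rightarrow> real) \<Rightarrow> bool" where
  "smooth_fun f \<longleftrightarrow> (\<forall>k x. ((deriv ^^ k) f) differentiable (at x))"

type_synonym piece = "(real \<Rightarrow> real) \<times> (real \<Rightarrow> real) \<times> (real \<Rightarrow> real) \<times> (real \<Rightarrow> real)"

definition pr :: "piece \<Rightarrow> real \<Rightarrow> real" where "pr p = fst p"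
definition pKl :: "piece \<Rightarrow> real \<Rightarrow> real" where "pKl p = fst (snd p)"
definition pKr :: "piece \<Rightarrow> real \<Rightarrow> real" where "pKr p = fst (snd (snd p))"
definition pE :: "piece \<Rightarrow> real \<Rightarrow> real" where "pE p = snd (snd (snd p))"

text \<open>Matter energy density (excluding the electromagnetic energy) from the
Hamiltonian constraint  R + K^2 - |K|^2 = 16 pi mu + 2 E^2, where for these data
R = (2/r^2)(1 - r'^2 - 2 r r'') and K^2 - |K|^2 = 4 K_l K_r + 2 K_r^2.\<close>
definition mu :: "piece \<Rightarrow> real \<Rightarrow> real" where
  "mu p l = (1 / (16 * pi)) *
      ((2 / (pr p l)\<^sup>2) * (1 - (deriv (pr p) l)\<^sup>2 - 2 * pr p l * deriv (deriv (pr p)) l)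
       + 4 * pKl p l * pKr p l + 2 * (pKr p l)\<^sup>2)
    - (pE p l)\<^sup>2 / (8 * pi)"

text \<open>Radial matter momentum density from the momentum constraint
div(K - (tr K) h) = 8 pi J (the purely electric field carries no momentum).\<close>
definition Jmom :: "piece \<Rightarrow> real \<Rightarrow> real" where
  "Jmom p l = (1 / (8 * pi)) *
      (2 * (deriv (pr p) l / pr p l) * (pKl p l - pKr p l) - 2 * deriv (pKr p) l)"

definition theta_plus :: "piece \<Rightarrow> real \<Rightarrow> real" where
  "theta_plus p l = (2 / pr p l) * (deriv (pr p) l + pKr p l * pr p l)"
definition theta_minus :: "piece \<Rightarrow> real \<Rightarrow> real" where
  "theta_minus p l = (2 / pr p l) * (deriv (pr p) l - pKr p l * pr p l)"

definition glue :: "real \<Rightarrow> (piece \<Rightarrow> real \<Rightarrow> real) \<Rightarrow> piece \<Rightarrow> piece \<Rightarrow> real \<Rightarrow> real" where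
  "glue ls F p1 p2 l = (if l \<le> ls then F p1 l else F p2 l)"

definition theta_prod :: "real \<Rightarrow> piece \<Rightarrow> piece \<Rightarrow> real \<Rightarrow> real" where
  "theta_prod ls p1 p2 l =
     glue ls theta_plus p1 p2 l * glue ls theta_minus p1 p2 l"

text \<open>Misner--Sharp (Hawking) mass of the sphere at l; its limit at infinity is
the ADM mass of spherically symmetric asymptotically flat data.\<close>
definition ms_mass :: "piece \<Rightarrow> real \<Rightarrow> real" where
  "ms_mass p l = (pr p l / 2) * (1 - (deriv (pr p) l)\<^sup>2 + (pKr p l)\<^sup>2 * (pr p l)\<^sup>2)"

text \<open>Regularity up to a thin shell at ls > 0, including smoothness at the
centre l = 0 (r odd with r'(0) = 1, K_l and K_r even with K_l(0) = K_r(0),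
E odd), positivity of r away from the centre, and continuity of r at the shell.\<close>
definition regular_up_to_shell :: "real \<Rightarrow> piece \<Rightarrow> piece \<Rightarrow> bool" where
  "regular_up_to_shell ls p1 p2 \<longleftrightarrow>
     0 < ls \<and>
     smooth_fun (pr p1) \<and> smooth_fun (pKl p1) \<and> smooth_fun (pKr p1) \<and> smooth_fun (pE p1) \<and>
     smooth_fun (pr p2) \<and> smooth_fun (pKl p2) \<and> smooth_fun (pKr p2) \<and> smooth_fun (pE p2) \<and>
     (\<forall>l. pr p1 (- l) = - pr p1 l) \<and> deriv (pr p1) 0 = 1 \<and>
     (\<forall>l. pKl p1 (- l) = pKl p1 l) \<and> (\<forall>l. pKr p1 (- l) = pKr p1 l) \<and>
     pKl p1 0 = pKr p1 0 \<and> (\<forall>l. pE p1 (- l) = - pE p1 l) \<and>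
     (\<forall>l. 0 < l \<and> l \<le> ls \<longrightarrow> 0 < pr p1 l) \<and>
     (\<forall>l. ls \<le> l \<longrightarrow> 0 < pr p2 l) \<and>
     pr p1 ls = pr p2 ls"

text \<open>Dominant energy condition: mu \<ge> |J| for the smooth parts, and for the
shell the surface energy density sigma = -[r']/(4 pi r) dominates the surface
momentum density |j| = |[K_r]|/(4 pi), where [f] = f(ls+) - f(ls-).\<close>
definition dominant_energy :: "real \<Rightarrow> piece \<Rightarrow> piece \<Rightarrow> bool" where
  "dominant_energy ls p1 p2 \<longleftrightarrow>
     (\<forall>l. 0 < l \<and> l < ls \<longrightarrow> \<bar>Jmom p1 l\<bar> \<le> mu p1 l) \<and>
     (\<forall>l. ls < l \<longrightarrow> \<bar>Jmom p2 l\<bar> \<le> mu p2 l) \<and>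
     pr p2 ls * \<bar>pKr p2 ls - pKr p1 ls\<bar> \<le> - (deriv (pr p2) ls - deriv (pr p1) ls)"

text \<open>Asymptotic flatness in spherical symmetry: r \<rightarrow> oo, and in terms of the area
radius h - delta = O(1/r), K = O(1/r^2), with derivative falloffs
dh = O(1/r^2), dK = O(1/r^3).\<close>
definition asymptotically_flat :: "piece \<Rightarrow> bool" where
  "asymptotically_flat p \<longleftrightarrow>
     filterlim (pr p) at_top at_top \<and>
     (\<exists>C. eventually (\<lambda>l.
         \<bar>deriv (pr p) l - 1\<bar> \<le> C / pr p l \<and>
         \<bar>deriv (deriv (pr p)) l\<bar> \<le> C / (pr p l)\<^sup>2 \<and>
         \<bar>pKl p l\<bar> \<le> C / (pr p l)\<^sup>2 \<and> \<bar>pKr p l\<bar> \<le> C / (pr p l)\<^sup>2 \<and>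
         \<bar>deriv (pKl p) l\<bar> \<le> C / (pr p l)^3 \<and> \<bar>deriv (pKr p) l\<bar> \<le> C / (pr p l)^3) at_top)"

definition time_symmetric :: "real \<Rightarrow> piece \<Rightarrow> piece \<Rightarrow> bool" where
  "time_symmetric ls p1 p2 \<longleftrightarrow>
     (\<forall>l\<ge>0. glue ls pKl p1 p2 l = 0 \<and> glue ls pKr p1 p2 l = 0)"

definition maximal :: "real \<Rightarrow> piece \<Rightarrow> piece \<Rightarrow> bool" where
  "maximal ls p1 p2 \<longleftrightarrow>
     (\<forall>l\<ge>0. glue ls pKl p1 p2 l + 2 * glue ls pKr p1 p2 l = 0)"

definition horizon_at :: "real \<Rightarrow> piece \<Rightarrow> piece \<Rightarrow> real \<Rightarrow> bool" where
  "horizon_at ls p1 p2 lh \<longleftrightarrow>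
     theta_prod ls p1 p2 lh = 0 \<and>
     (\<exists>\<epsilon>>0. (\<forall>l. lh - \<epsilon> < l \<and> l < lh \<longrightarrow> theta_prod ls p1 p2 l < 0) \<and>
            (\<forall>l. lh < l \<and> l < lh + \<epsilon> \<longrightarrow> 0 \<le> theta_prod ls p1 p2 l))"

definition electrovac_outside :: "real \<Rightarrow> piece \<Rightarrow> piece \<Rightarrow> real \<Rightarrow> real \<Rightarrow> bool" where
  "electrovac_outside ls p1 p2 l0 Q \<longleftrightarrow>
     ls \<le> l0 \<and>
     (\<forall>l. l0 < l \<longrightarrow> mu p2 l = 0 \<and> Jmom p2 l = 0 \<and> pE p2 l = Q / (pr p2 l)\<^sup>2)"

end

theory Submission
  imports Defs "HOL-Real_Asymp.Real_Asymp" "HOL-Computational_Algebra.Polynomial"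
begin


lemma quot_der:
  assumes "(f has_real_derivative f') (at x)" "(g has_real_derivative g') (at x)" "g x \<noteq> 0"
    "(f' * g x - f x * g')/(g x)^2 = D"
  shows "((\<lambda>y. f y / g y) has_real_derivative D) (at x)"
proof -
  have "(f' * g x - g' * f x) / (g x * g x) = D" using assms(4) by (simp add: power2_eq_square mult.commute)
  then show ?thesis using DERIV_quotient[OF assms(1,2,3)] by simp
qed

lemma div_eq_div: "(B::real) \<noteq> 0 \<Longrightarrow> E \<noteq> 0 \<Longrightarrow> A*E = C*B \<Longrightarrow> A/B = C/E"
  by (simp add: frac_eq_eq)

definition Fq :: "real \<Rightarrow> real" where
  "Fq x = (338+1599*x+36500*x^2-250000*x^3)/(26*(13+250*x))"
definition Fpq :: "real \<Rightarrow> real" where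
  "Fpq x = ((1599+73000*x-750000*x^2)*(13+250*x) - 250*(338+1599*x+36500*x^2-250000*x^3))/(26*(13+250*x)^2)"
definition Krq :: "real \<Rightarrow> real" where
  "Krq x = x^2*(10049+36500*x-250000*x^2)/(26*(13+250*x))"
definition Krpq :: "real \<Rightarrow> real" where
  "Krpq x = ((20098*x+109500*x^2-1000000*x^3)*(13+250*x) - 250*(10049*x^2+36500*x^3-250000*x^4))/(26*(13+250*x)^2)"
definition Klq :: "real \<Rightarrow> real" where
  "Klq x = (-130637*x^2-949000*x^3+625000*x^4+125000000*x^5)/(26*(13+250*x)^2)"
definition Klpq :: "real \<Rightarrow> real" where
  "Klpq x = ((-261274*x-2847000*x^2+2500000*x^3+625000000*x^4)*(13+250*x) - 500*(-130637*x^2-949000*x^3+625000*x^4+125000000*x^5))/(26*(13+250*x)^3)"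
definition Vq :: "real \<Rightarrow> real" where "Vq x = -(x^2 * Fq x)"

lemma Fq_der: "x > -13/250 \<Longrightarrow> (Fq has_real_derivative Fpq x) (at x)"
proof -
  assume h: "x > -13/250"
  have nz: "13 + 250*x \<noteq> 0" "338 + 6500*x \<noteq> 0" using h by auto
  have e: "Fq = (\<lambda>x. (338+1599*x+36500*x^2-250000*x^3)/(26*(13+250*x)))" by (simp add: Fq_def[abs_def])
  show ?thesis unfolding e Fpq_def
    apply (rule quot_der)
       apply (rule derivative_eq_intros refl | simp add: nz)+
    apply (rule div_eq_div)
    using nz apply simp
    using nz apply simp
    by (simp add: algebra_simps power2_eq_square power3_eq_cube)
qed

lemma Krq_der: "x > -13/250 \<Longrightarrow> (Krq has_real_derivative Krpq x) (at x)"
proof -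
  assume h: "x > -13/250"
  have nz: "13 + 250*x \<noteq> 0" "338 + 6500*x \<noteq> 0" using h by auto
  have e: "Krq = (\<lambda>x. (10049*x^2+36500*x^3-250000*x^4)/(26*(13+250*x)))"
    by (rule ext) (simp add: Krq_def algebra_simps power2_eq_square power3_eq_cube power4_eq_xxxx)
  show ?thesis unfolding e Krpq_def
    apply (rule quot_der)
       apply (rule derivative_eq_intros refl | simp add: nz)+
    apply (rule div_eq_div)
    using nz apply simp
    using nz apply simp
    by (simp add: algebra_simps power2_eq_square power3_eq_cube)
qed

lemma Klq_der: "x > -13/250 \<Longrightarrow> (Klq has_real_derivative Klpq x) (at x)"
proof -
  assume h: "x > -13/250"
  have nz: "13 + 250*x \<noteq> 0" "338 + 6500*x \<noteq> 0" using h by auto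
  have e: "Klq = (\<lambda>x. (-130637*x^2-949000*x^3+625000*x^4+125000000*x^5)/(26*(13+250*x)^2))"
    by (rule ext) (simp add: Klq_def)
  show ?thesis unfolding e Klpq_def
    apply (rule quot_der)
       apply (rule derivative_eq_intros refl | simp add: nz)+
    apply (rule div_eq_div)
    using nz apply simp
    using nz apply simp
    by (simp add: algebra_simps power2_eq_square power3_eq_cube power4_eq_xxxx)
qed

lemma mu0: "0 < x \<Longrightarrow> x < 26/125 \<Longrightarrow>
  2*x^2*(1 - (Fq x)^2 - 2*(1/x)*(Fpq x * Vq x)) + 4*Klq x*Krq x + 2*(Krq x)^2 - 200*x^4 = 0"
proof -
  assume h: "0 < x" "x < 26/125"
  define d where "d = 13 + 250*x"
  have nz: "d \<noteq> 0" "x \<noteq> 0" using h by (auto simp: d_def)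
  have "2*x^2*(1 - (Fq x)^2 - 2*(1/x)*(Fpq x * Vq x)) + 4*Klq x*Krq x + 2*(Krq x)^2 - 200*x^4
     = 2*x^2*(1 - ((338+1599*x+36500*x^2-250000*x^3)/(26*d))^2 - 2*(1/x)*((((1599+73000*x-750000*x^2)*d - 250*(338+1599*x+36500*x^2-250000*x^3))/(26*d^2)) * (-(x^2*((338+1599*x+36500*x^2-250000*x^3)/(26*d)))))) 
       + 4*((-130637*x^2-949000*x^3+625000*x^4+125000000*x^5)/(26*d^2))*(x^2*(10049+36500*x-250000*x^2)/(26*d)) + 2*(x^2*(10049+36500*x-250000*x^2)/(26*d))^2 - 200*x^4"
    unfolding Fq_def Fpq_def Vq_def Klq_def Krq_def d_def by simp
  also have "\<dots> = 0"
    using nz apply (simp add: field_simps)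
    unfolding d_def by algebra
  finally show ?thesis .
qed

lemma J0: "0 < x \<Longrightarrow> Klq x - Krq x = - x * Krpq x"
proof -
  assume h: "0 < x"
  define d where "d = 13 + 250*x"
  have nz: "d \<noteq> 0" using h by (auto simp: d_def)
  have "Klq x - Krq x + x * Krpq x = (-130637*x^2-949000*x^3+625000*x^4+125000000*x^5)/(26*d^2)
     - x^2*(10049+36500*x-250000*x^2)/(26*d) + x*(((20098*x+109500*x^2-1000000*x^3)*d - 250*(10049*x^2+36500*x^3-250000*x^4))/(26*d^2))"
    unfolding Klq_def Krq_def Krpq_def d_def by simp
  also have "\<dots> = 0"
    using nz apply (simp add: field_simps)
    unfolding d_def by algebra
  finally show ?thesis by simp
qed

lemma ms0: "0 < x \<Longrightarrow> ((1/x)/2) * (1 - (Fq x)^2 + (Krq x)^2 * (1/x)^2) = 29/2 - 50*x"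
proof -
  assume h: "0 < x"
  define d where "d = 13 + 250*x"
  have nz: "d \<noteq> 0" "x \<noteq> 0" using h by (auto simp: d_def)
  have "((1/x)/2) * (1 - (Fq x)^2 + (Krq x)^2 * (1/x)^2) - (29/2 - 50*x) =
    ((1/x)/2) * (1 - ((338+1599*x+36500*x^2-250000*x^3)/(26*d))^2 + (x^2*(10049+36500*x-250000*x^2)/(26*d))^2 * (1/x)^2) - (29/2 - 50*x)"
    unfolding Fq_def Krq_def d_def by simp
  also have "\<dots> = 0"
    using nz apply (simp add: field_simps)
    unfolding d_def by algebra
  finally show ?thesis by simp
qed

lemma th0: "0 < x \<Longrightarrow> ((2 / (1/x)) * (Fq x + Krq x * (1/x))) * ((2 / (1/x)) * (Fq x - Krq x * (1/x)))
   = 4*x^2*((1-25*x)*(1-4*x))"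
proof -
  assume h: "0 < x"
  define d where "d = 13 + 250*x"
  have nz: "d \<noteq> 0" "x \<noteq> 0" using h by (auto simp: d_def)
  have "((2 / (1/x)) * (Fq x + Krq x * (1/x))) * ((2 / (1/x)) * (Fq x - Krq x * (1/x))) - 4*x^2*((1-25*x)*(1-4*x)) =
     ((2 / (1/x)) * ((338+1599*x+36500*x^2-250000*x^3)/(26*d) + x^2*(10049+36500*x-250000*x^2)/(26*d) * (1/x))) * ((2 / (1/x)) * ((338+1599*x+36500*x^2-250000*x^3)/(26*d) - x^2*(10049+36500*x-250000*x^2)/(26*d) * (1/x))) - 4*x^2*((1-25*x)*(1-4*x))"
    unfolding Fq_def Krq_def d_def by simp
  also have "\<dots> = 0"
    using nz apply (simp add: field_simps)
    unfolding d_def by algebra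
  finally show ?thesis by simp
qed

lemma Fq_pos: "0 < x \<Longrightarrow> x < 26/125 \<Longrightarrow> Fq x > 0"
proof -
  assume h: "0 < x" "x < 26/125"
  have "338+1599*x+36500*x^2-250000*x^3 = (26-125*x)*(13+124*x+2000*x^2)"
    by (simp add: algebra_simps power2_eq_square power3_eq_cube)
  moreover have "(26-125*x)*(13+124*x+2000*x^2) > 0" using h by (intro mult_pos_pos) (auto intro: add_pos_nonneg)
  ultimately show ?thesis unfolding Fq_def using h by (intro divide_pos_pos) auto
qed

lemma Vq_neg: "0 < x \<Longrightarrow> x < 26/125 \<Longrightarrow> Vq x < 0"
  unfolding Vq_def using Fq_pos by simp

lemma a1: "(\<lambda>x. Fq x - 1) \<in> O[at_right 0](\<lambda>x. x)"
  unfolding Fq_def by real_asymp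
lemma a2: "(\<lambda>x. Fpq x * Vq x) \<in> O[at_right 0](\<lambda>x. x^2)"
  unfolding Fpq_def Vq_def Fq_def by real_asymp
lemma a3: "(\<lambda>x. Klpq x * Vq x) \<in> O[at_right 0](\<lambda>x. x^3)"
  unfolding Klpq_def Vq_def Fq_def by real_asymp
lemma a4: "(\<lambda>x. Krpq x * Vq x) \<in> O[at_right 0](\<lambda>x. x^3)"
  unfolding Krpq_def Vq_def Fq_def by real_asymp
lemma a5: "(\<lambda>x. Klq x) \<in> O[at_right 0](\<lambda>x. x^2)"
  unfolding Klq_def by real_asymp
lemma a6: "(\<lambda>x. Krq x) \<in> O[at_right 0](\<lambda>x. x^2)"
  unfolding Krq_def by real_asymp



definition Rq :: "real \<Rightarrow> real" where
  "Rq y = (75232000*y + 7680384)/(3133*(13+124*y+2000*y^2))"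

definition L0 :: "real \<Rightarrow> real" where
  "L0 x = 1/x - 29/2 * ln x + 15625/6266 * ln (26 - 125*x) + integral {0..x} Rq"

definition kap :: real where "kap = 200/41 - L0 (41/200)"
definition Lf :: "real \<Rightarrow> real" where "Lf x = L0 x + kap"

lemma Rq_den_pos: "0 \<le> y \<Longrightarrow> 13+124*y+2000*y^2 > (0::real)"
  by (intro add_pos_nonneg) auto

lemma Rq_cont: "continuous_on {0..1} Rq"
proof -
  have nz: "3133*(13+124*y+2000*y^2) \<noteq> (0::real)" if "y \<in> {0..1}" for y
  proof -
    have "0 \<le> y" using that by simp
    from Rq_den_pos[OF this] show ?thesis by simp
  qed
  show ?thesis unfolding Rq_def[abs_def]
    using nz by (auto intro!: continuous_intros)
qed

lemma Rq_nonneg: "0 \<le> y \<Longrightarrow> 0 \<le> Rq y"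
  unfolding Rq_def using Rq_den_pos[of y] by (intro divide_nonneg_pos) auto

lemma Rq_le: "0 \<le> y \<Longrightarrow> y \<le> 1 \<Longrightarrow> Rq y \<le> 2100"
proof -
  assume h: "0 \<le> y" "y \<le> 1"
  have d: "13+124*y+2000*y^2 \<ge> 13" using h by auto
  have "75232000*y + 7680384 \<le> 2100 * (3133*(13+124*y+2000*y^2))"
    using h d by simp
  then show ?thesis unfolding Rq_def using Rq_den_pos[of y] h
    by (simp add: divide_le_eq)
qed

lemma int_bounds: "0 \<le> x \<Longrightarrow> x \<le> 1 \<Longrightarrow> 0 \<le> integral {0..x} Rq \<and> integral {0..x} Rq \<le> 2100"
proof -
  assume h: "0 \<le> x" "x \<le> 1"
  have ci: "Rq integrable_on {0..x}"
    using Rq_cont h by (intro integrable_continuous_real) (auto intro: continuous_on_subset)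
  have "0 \<le> integral {0..x} Rq" using ci by (intro integral_nonneg) (auto intro: Rq_nonneg)
  moreover have "integral {0..x} Rq \<le> integral {0..x} (\<lambda>_. 2100)"
    using ci h by (intro integral_le) (auto intro: Rq_le)
  moreover have "integral {0..x} (\<lambda>_. 2100::real) \<le> 2100" using h by simp
  ultimately show ?thesis by linarith
qed

lemma L0_der: "0 < x \<Longrightarrow> x < 26/125 \<Longrightarrow> (L0 has_real_derivative 1 / Vq x) (at x)"
proof -
  assume h: "0 < x" "x < 26/125"
  have I: "((\<lambda>x. integral {0..x} Rq) has_real_derivative Rq x) (at x)"
  proof -
    have "((\<lambda>x. integral {0..x} Rq) has_real_derivative Rq x) (at x within {0..1})"
      using h by (intro integral_has_real_derivative Rq_cont) auto
    moreover have "at x within {0..1} = at x" using h by (intro at_within_interior) auto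
    ultimately show ?thesis by simp
  qed
  have D: "(L0 has_real_derivative (-1/x^2 - 29/2 * (1/x) + 15625/6266 * (-125/(26-125*x)) + Rq x)) (at x)"
  proof -
    have d1: "((\<lambda>x. 1/x) has_real_derivative -1/x^2) (at x)"
      using h by (auto intro!: derivative_eq_intros simp: power2_eq_square)
    have d2: "(ln has_real_derivative 1/x) (at x)"
      using h by (auto intro!: derivative_eq_intros)
    have d3: "((\<lambda>x. ln (26 - 125*x)) has_real_derivative (-125/(26-125*x))) (at x)"
    proof -
      have "((\<lambda>x. ln (26 - 125*x)) has_real_derivative (1/(26-125*x)) * (-125)) (at x)"
        apply (rule DERIV_chain2[where f=ln])
        using h apply (auto intro!: derivative_eq_intros)
        done
      then show ?thesis by simp
    qed
    have "((\<lambda>x. 1/x - 29/2 * ln x + 15625/6266 * ln (26 - 125*x) + integral {0..x} Rq) has_real_derivative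
       (-1/x^2 - 29/2 * (1/x) + 15625/6266 * (-125/(26-125*x)) + Rq x)) (at x)"
      by (intro DERIV_add DERIV_diff DERIV_cmult d1 d2 d3 I)
    then show ?thesis unfolding L0_def[abs_def] .
  qed
  have e: "-1/x^2 - 29/2 * (1/x) + 15625/6266 * (-125/(26-125*x)) + Rq x = 1 / Vq x"
  proof -
    have nz: "x \<noteq> 0" "26 - 125*x \<noteq> 0" "13+124*x+2000*x^2 \<noteq> 0" "13 + 250*x \<noteq> 0"
      "338+1599*x+36500*x^2-250000*x^3 \<noteq> 0"
      using h Rq_den_pos[of x] Fq_pos[OF h] by (auto simp: Fq_def)
    have v: "Vq x = (-(x^2 * (338+1599*x+36500*x^2-250000*x^3))) / (26*(13+250*x))"
      unfolding Vq_def Fq_def by simp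
    have "1 / Vq x = -(26*(13+250*x)) / (x^2 * (338+1599*x+36500*x^2-250000*x^3))"
      unfolding v using nz by (simp add: divide_simps)
    moreover have "-1/x^2 - 29/2 * (1/x) + 15625/6266 * (-125/(26-125*x)) + Rq x
       = -(26*(13+250*x)) / (x^2 * (338+1599*x+36500*x^2-250000*x^3))"
    proof -
      define a where "a = 26 - 125*x"
      define q where "q = 13+124*x+2000*x^2"
      have N: "338+1599*x+36500*x^2-250000*x^3 = a * q"
        unfolding a_def q_def by (simp add: algebra_simps power2_eq_square power3_eq_cube)
      have nz2: "a \<noteq> 0" "q \<noteq> 0" "x \<noteq> 0" using nz unfolding a_def q_def by auto
      have "-1/x^2 - 29/2 * (1/x) + 15625/6266 * (-125/(26-125*x)) + Rq x
         = -1/x^2 - 29/2 * (1/x) + 15625/6266 * (-125/a) + (75232000*x + 7680384)/(3133*q)"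
        unfolding Rq_def a_def q_def by simp
      also have "\<dots> = -(26*(13+250*x)) / (x^2 * (a*q))"
        using nz2 apply (simp add: field_simps)
        unfolding a_def q_def by (simp add: algebra_simps power2_eq_square power3_eq_cube power4_eq_xxxx)
      finally show ?thesis unfolding N .
    qed
    ultimately show ?thesis by simp
  qed
  show ?thesis using D e by simp
qed


lemma Lf_der: "0 < x \<Longrightarrow> x < 26/125 \<Longrightarrow> (Lf has_real_derivative 1 / Vq x) (at x)"
proof -
  assume h: "0 < x" "x < 26/125"
  have "((\<lambda>x. L0 x + kap) has_real_derivative 1 / Vq x + 0) (at x)"
    by (intro DERIV_add L0_der h DERIV_const)
  then show ?thesis unfolding Lf_def[abs_def] by simp
qed

lemma Lf_isCont: "0 < x \<Longrightarrow> x < 26/125 \<Longrightarrow> isCont Lf x"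
  using Lf_der DERIV_isCont by blast

lemma Lf_strict: "0 < a \<Longrightarrow> a < b \<Longrightarrow> b < 26/125 \<Longrightarrow> Lf b < Lf a"
proof -
  assume h: "0 < a" "a < b" "b < 26/125"
  show ?thesis
  proof (rule DERIV_neg_imp_decreasing_open[OF h(2)])
    fix x assume x: "a < x" "x < b"
    show "\<exists>y. DERIV Lf x :> y \<and> y < 0"
      using Lf_der[of x] Vq_neg[of x] x h by (intro exI[of _ "1 / Vq x"]) auto
  next
    show "continuous_on {a..b} Lf"
      using h by (intro continuous_at_imp_continuous_on ballI Lf_isCont) auto
  qed
qed

lemma Lf_mono: "0 < a \<Longrightarrow> a \<le> b \<Longrightarrow> b < 26/125 \<Longrightarrow> Lf b \<le> Lf a"
  using Lf_strict[of a b] by (cases "a = b") auto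

definition E1 :: "real \<Rightarrow> real" where
  "E1 x = 1/x - 29/2 * ln x + 15625/6266 * ln (26 - 125*x)"

lemma E1_top: "filterlim E1 at_top (at_right 0)"
  unfolding E1_def by real_asymp

lemma E1_bot: "filterlim E1 at_bot (at_left (26/125))"
  unfolding E1_def by real_asymp

lemma L0_E1: "0 < x \<Longrightarrow> x < 26/125 \<Longrightarrow> E1 x \<le> L0 x \<and> L0 x \<le> E1 x + 2100"
  using int_bounds[of x] unfolding L0_def E1_def by auto

lemma Lf_big: "\<exists>a. 0 < a \<and> a < 26/125 \<and> l \<le> Lf a"
proof -
  have "eventually (\<lambda>x. l - kap \<le> E1 x) (at_right 0)"
    using E1_top by (simp add: filterlim_at_top)
  then obtain b where b: "b > 0" "\<And>y. y > 0 \<Longrightarrow> y < b \<Longrightarrow> l - kap \<le> E1 y"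
    unfolding eventually_at_right_field by auto
  define a where "a = min (b/2) (13/125)"
  have a: "0 < a" "a < b" "a < 26/125" using b(1) unfolding a_def by auto
  have "l - kap \<le> E1 a" using b(2)[OF a(1,2)] .
  moreover have "E1 a \<le> L0 a" using L0_E1[OF a(1,3)] by simp
  ultimately show ?thesis using a unfolding Lf_def by (intro exI[of _ a]) auto
qed

lemma Lf_small: "\<exists>a. 0 < a \<and> a < 26/125 \<and> Lf a \<le> l"
proof -
  have "eventually (\<lambda>x. E1 x \<le> l - kap - 2100) (at_left (26/125))"
    using E1_bot by (simp add: filterlim_at_bot)
  then obtain b where b: "b < 26/125" "\<And>y. y > b \<Longrightarrow> y < 26/125 \<Longrightarrow> E1 y \<le> l - kap - 2100"
    unfolding eventually_at_left_field by auto
  define a where "a = max ((b + 26/125)/2) (13/125)"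
  have a: "0 < a" "b < a" "a < 26/125" using b(1) unfolding a_def by (auto simp: max_def)
  have "E1 a \<le> l - kap - 2100" using b(2)[OF a(2,3)] .
  moreover have "L0 a \<le> E1 a + 2100" using L0_E1[OF a(1,3)] by simp
  ultimately show ?thesis using a unfolding Lf_def by (intro exI[of _ a]) auto
qed

lemma Lf_surj: "\<exists>x. 0 < x \<and> x < 26/125 \<and> Lf x = l"
proof -
  obtain a where a: "0 < a" "a < 26/125" "l \<le> Lf a" using Lf_big by blast
  obtain b where b: "0 < b" "b < 26/125" "Lf b \<le> l" using Lf_small by blast
  have ab: "a \<le> b"
  proof (rule ccontr)
    assume "\<not> a \<le> b"
    then have "Lf a < Lf b" using Lf_strict[of b a] a b by auto
    then show False using a b by auto
  qed
  have "continuous_on {a..b} Lf"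
    using a b by (intro continuous_at_imp_continuous_on ballI Lf_isCont) auto
  from IVT2'[of Lf b l a, OF b(3) a(3) ab this] obtain x where "a \<le> x" "x \<le> b" "Lf x = l" by auto
  then show ?thesis using a b by (intro exI[of _ x]) auto
qed

lemma Lf_inj: "0 < x \<Longrightarrow> x < 26/125 \<Longrightarrow> 0 < y \<Longrightarrow> y < 26/125 \<Longrightarrow> Lf x = Lf y \<Longrightarrow> x = y"
  using Lf_strict[of x y] Lf_strict[of y x] by (cases x y rule: linorder_cases) auto

definition uf :: "real \<Rightarrow> real" where
  "uf l = (THE x. 0 < x \<and> x < 26/125 \<and> Lf x = l)"

lemma uf_prop: "0 < uf l \<and> uf l < 26/125 \<and> Lf (uf l) = l"
proof -
  obtain x where x: "0 < x" "x < 26/125" "Lf x = l" using Lf_surj by blast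
  have "\<exists>!x. 0 < x \<and> x < 26/125 \<and> Lf x = l"
    using x Lf_inj by blast
  then show ?thesis unfolding uf_def by (rule theI')
qed

lemma uf_pos: "0 < uf l" and uf_lt: "uf l < 26/125" and Lf_uf: "Lf (uf l) = l"
  using uf_prop by auto

lemma uf_Lf: "0 < x \<Longrightarrow> x < 26/125 \<Longrightarrow> uf (Lf x) = x"
  using Lf_inj[of "uf (Lf x)" x] uf_prop[of "Lf x"] by auto

lemma uf_der: "(uf has_real_derivative Vq (uf l)) (at l)"
proof -
  define x where "x = uf l"
  have x: "0 < x" "x < 26/125" using uf_prop unfolding x_def by auto
  define a where "a = x/2"
  define b where "b = (x + 26/125)/2"
  have ab: "0 < a" "a < x" "x < b" "b < 26/125" using x unfolding a_def b_def by auto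
  have cont: "isCont uf (Lf x)"
    apply (rule isCont_inverse_function2[OF ab(2,3)])
    using ab by (auto intro!: uf_Lf Lf_isCont)
  then have cont': "isCont uf l" using Lf_uf unfolding x_def by simp
  have "DERIV uf l :> inverse (1 / Vq x)"
    apply (rule DERIV_inverse_function[where f=Lf and a="l - 1" and b="l + 1"])
    using Lf_der[OF x] unfolding x_def apply simp
    using Vq_neg[OF x] unfolding x_def apply simp
      apply simp
     apply simp
    using Lf_uf apply simp
    using cont' .
  then show ?thesis unfolding x_def by simp
qed

lemma uf_strict: "l1 < l2 \<Longrightarrow> uf l2 < uf l1"
proof (rule ccontr)
  assume h: "l1 < l2" "\<not> uf l2 < uf l1"
  then have "Lf (uf l2) \<le> Lf (uf l1)" using Lf_mono[of "uf l1" "uf l2"] uf_prop by auto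
  then show False using h Lf_uf by simp
qed

lemma uf_lim: "filterlim uf (at_right 0) at_top"
proof (rule tendsto_imp_filterlim_at_right)
  show "eventually (\<lambda>l. uf l > 0) at_top" using uf_pos by simp
  show "(uf \<longlongrightarrow> 0) at_top"
  proof (rule order_tendstoI)
    fix a :: real assume "a < 0"
    then have "\<forall>l. a < uf l" using uf_pos by (metis less_trans)
    then show "eventually (\<lambda>l. a < uf l) at_top" by (rule always_eventually)
  next
    fix e :: real assume e: "0 < e"
    define x where "x = min (e/2) (13/125)"
    have x: "0 < x" "x < 26/125" "x < e" using e unfolding x_def by auto
    have "uf l < e" if "l > Lf x" for l
    proof (rule ccontr)
      assume "\<not> uf l < e"
      then have "x \<le> uf l" using x by auto
      then have "Lf (uf l) \<le> Lf x" using Lf_mono[of x "uf l"] x uf_prop by auto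
      then show False using that Lf_uf by simp
    qed
    then show "eventually (\<lambda>l. uf l < e) at_top"
      by (intro eventually_at_top_dense[THEN iffD2] exI[of _ "Lf x"]) auto
  qed
qed



definition dq :: "real poly \<Rightarrow> real poly \<Rightarrow> real poly \<Rightarrow> nat \<Rightarrow> real poly" where
  "dq pV D p k = (pderiv p * D - smult (of_nat k) (p * pderiv D)) * pV"

lemma pow_quot_aux:
  fixes a a' d d' :: real
  assumes "d \<noteq> 0"
  shows "(a' * d ^ Suc m - a * (of_nat (Suc m) * d' * d ^ m)) / (d ^ Suc m)^2
         = (a' * d - of_nat (Suc m) * a * d') / d ^ (Suc m + 1)"
proof -
  have n: "a' * d ^ Suc m - a * (of_nat (Suc m) * d' * d ^ m) = d ^ m * (a' * d - of_nat (Suc m) * a * d')"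
    by (simp add: algebra_simps)
  have dd: "(d ^ Suc m)^2 = d ^ m * d ^ (Suc m + 1)"
    by (simp add: power2_eq_square algebra_simps power_add[symmetric])
  have "d ^ m \<noteq> 0" using assms by simp
  then show ?thesis unfolding n dd by simp
qed

lemma rat_der_x:
  assumes "poly D x \<noteq> (0::real)"
  shows "((\<lambda>x. poly p x / poly D x ^ k) has_real_derivative
     (poly (pderiv p) x * poly D x - of_nat k * poly p x * poly (pderiv D) x) / poly D x ^ (k+1)) (at x)"
proof (cases k)
  case 0
  then show ?thesis using assms by simp
next
  case (Suc m)
  have "((\<lambda>x. poly p x / poly D x ^ Suc m) has_real_derivative
     (poly (pderiv p) x * poly D x ^ Suc m - poly p x * (of_nat (Suc m) * poly (pderiv D) x * poly D x ^ m)) / (poly D x ^ Suc m)^2) (at x)"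
  proof (rule quot_der)
    show "((\<lambda>x. poly D x ^ Suc m) has_real_derivative of_nat (Suc m) * poly (pderiv D) x * poly D x ^ m) (at x)"
      using DERIV_power[OF poly_DERIV[of D x], of "Suc m"] by (simp add: algebra_simps)
  qed (use assms in auto)
  then show ?thesis unfolding Suc using pow_quot_aux[OF assms] by simp
qed

context
  fixes u :: "real \<Rightarrow> real" and pV D :: "real poly"
  assumes du: "\<And>l. (u has_real_derivative (poly pV (u l) / poly D (u l))) (at l)"
      and nzD: "\<And>l. poly D (u l) \<noteq> 0"
begin

lemma rf_der: "((\<lambda>l. poly p (u l) / poly D (u l) ^ k) has_real_derivative
     poly (dq pV D p k) (u l) / poly D (u l) ^ (k+2)) (at l)"
proof -
  have "((\<lambda>l. poly p (u l) / poly D (u l) ^ k) has_real_derivative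
     (poly (pderiv p) (u l) * poly D (u l) - of_nat k * poly p (u l) * poly (pderiv D) (u l)) / poly D (u l) ^ (k+1)
      * (poly pV (u l) / poly D (u l))) (at l)"
    by (rule DERIV_chain2[OF rat_der_x[OF nzD] du])
  moreover have "(poly (pderiv p) (u l) * poly D (u l) - of_nat k * poly p (u l) * poly (pderiv D) (u l)) / poly D (u l) ^ (k+1)
      * (poly pV (u l) / poly D (u l)) = poly (dq pV D p k) (u l) / poly D (u l) ^ (k+2)"
  proof -
    define d where "d = poly D (u l)"
    define A where "A = poly (pderiv p) (u l) * poly D (u l) - of_nat k * poly p (u l) * poly (pderiv D) (u l)"
    have pd: "poly (dq pV D p k) (u l) = A * poly pV (u l)"
      unfolding dq_def A_def by (simp add: algebra_simps)
    have "A / d ^ (k+1) * (poly pV (u l) / d) = (A * poly pV (u l)) / (d ^ (k+1) * d)"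
      by (metis times_divide_times_eq)
    also have "d ^ (k+1) * d = d ^ (k+2)" by simp
    finally show ?thesis unfolding pd A_def d_def .
  qed
  ultimately show ?thesis by simp
qed

lemma rf_deriv: "deriv (\<lambda>l. poly p (u l) / poly D (u l) ^ k) = (\<lambda>l. poly (dq pV D p k) (u l) / poly D (u l) ^ (k+2))"
  using rf_der DERIV_imp_deriv by blast

lemma rf_iter: "\<exists>p' k'. (deriv ^^ n) (\<lambda>l. poly p (u l) / poly D (u l) ^ k) = (\<lambda>l. poly p' (u l) / poly D (u l) ^ k')"
proof (induction n)
  case 0
  then show ?case by auto
next
  case (Suc n)
  then obtain p' k' where e: "(deriv ^^ n) (\<lambda>l. poly p (u l) / poly D (u l) ^ k) = (\<lambda>l. poly p' (u l) / poly D (u l) ^ k')"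
    by blast
  show ?case unfolding funpow.simps comp_def e rf_deriv by blast
qed

lemma rf_smooth: "smooth_fun (\<lambda>l. poly p (u l) / poly D (u l) ^ k)"
  unfolding smooth_fun_def
proof (intro allI)
  fix n x
  obtain p' k' where e: "(deriv ^^ n) (\<lambda>l. poly p (u l) / poly D (u l) ^ k) = (\<lambda>l. poly p' (u l) / poly D (u l) ^ k')"
    using rf_iter by blast
  show "(deriv ^^ n) (\<lambda>l. poly p (u l) / poly D (u l) ^ k) differentiable at x"
    unfolding e real_differentiable_def using rf_der by blast
qed

end

lemma poly_smooth: "smooth_fun (poly (p::real poly))"
proof -
  have "\<exists>q. (deriv ^^ n) (poly p) = poly q" for n
  proof (induction n)
    case 0 then show ?case by auto
  next
    case (Suc n)
    then obtain q where "(deriv ^^ n) (poly p) = poly q" by blast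
    then show ?case using DERIV_imp_deriv[OF poly_DERIV] by (auto intro!: exI[of _ "pderiv q"])
  qed
  then show ?thesis unfolding smooth_fun_def real_differentiable_def
    by (metis poly_DERIV)
qed



definition P1 :: piece where "P1 = ((\<lambda>l. l), (\<lambda>l. 0), (\<lambda>l. 0), (\<lambda>l. 0))"
definition P2 :: piece where
  "P2 = ((\<lambda>l. 1 / uf l), (\<lambda>l. Klq (uf l)), (\<lambda>l. Krq (uf l)), (\<lambda>l. 10 * (uf l)^2))"

lemma P1_simps: "pr P1 = (\<lambda>l. l)" "pKl P1 = (\<lambda>l. 0)" "pKr P1 = (\<lambda>l. 0)" "pE P1 = (\<lambda>l. 0)"
  by (simp_all add: P1_def pr_def pKl_def pKr_def pE_def)

lemma P2_simps: "pr P2 = (\<lambda>l. 1 / uf l)" "pKl P2 = (\<lambda>l. Klq (uf l))" "pKr P2 = (\<lambda>l. Krq (uf l))"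
   "pE P2 = (\<lambda>l. 10 * (uf l)^2)"
  by (simp_all add: P2_def pr_def pKl_def pKr_def pE_def)

lemma uf_gt: "uf l > -13/250" using uf_pos[of l] by linarith

lemma d_r2: "deriv (\<lambda>l. 1 / uf l) = (\<lambda>l. Fq (uf l))"
proof (rule ext)
  fix l
  have "((\<lambda>l. 1 / uf l) has_real_derivative (-1 / (uf l)^2) * Vq (uf l)) (at l)"
  proof (rule DERIV_chain2[where f="\<lambda>x. 1/x", OF _ uf_der])
    show "((\<lambda>x. 1/x) has_real_derivative -1 / (uf l)^2) (at (uf l))"
      using uf_pos[of l] by (auto intro!: derivative_eq_intros simp: power2_eq_square)
  qed
  moreover have "(-1 / (uf l)^2) * Vq (uf l) = Fq (uf l)"
    using uf_pos[of l] unfolding Vq_def by (simp add: field_simps)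
  ultimately show "deriv (\<lambda>l. 1 / uf l) l = Fq (uf l)" by (simp add: DERIV_imp_deriv)
qed

lemma d_F: "deriv (\<lambda>l. Fq (uf l)) l = Fpq (uf l) * Vq (uf l)"
  by (rule DERIV_imp_deriv[OF DERIV_chain2[OF Fq_der[OF uf_gt] uf_der]])
lemma d_Kr: "deriv (\<lambda>l. Krq (uf l)) l = Krpq (uf l) * Vq (uf l)"
  by (rule DERIV_imp_deriv[OF DERIV_chain2[OF Krq_der[OF uf_gt] uf_der]])
lemma d_Kl: "deriv (\<lambda>l. Klq (uf l)) l = Klpq (uf l) * Vq (uf l)"
  by (rule DERIV_imp_deriv[OF DERIV_chain2[OF Klq_der[OF uf_gt] uf_der]])

lemma d_id: "deriv (\<lambda>l::real. l) = (\<lambda>_. 1)"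
  by (rule ext, rule DERIV_imp_deriv, rule DERIV_ident)
lemma d_const: "deriv (\<lambda>l::real. c) = (\<lambda>_. 0)"
  by (rule ext, rule DERIV_imp_deriv, rule DERIV_const)

lemma mu_P2: "mu P2 l = 0"
proof -
  define u where "u = uf l"
  have u: "0 < u" "u < 26/125" using uf_prop unfolding u_def by auto
  have m: "2*u^2*(1 - (Fq u)^2 - 2*(1/u)*(Fpq u * Vq u)) + 4*Klq u*Krq u + 2*(Krq u)^2 = 200*u^4"
    using mu0[OF u] by linarith
  have "mu P2 l = (1 / (16 * pi)) * ((2 / (1/u)\<^sup>2) * (1 - (Fq u)\<^sup>2 - 2 * (1/u) * (Fpq u * Vq u))
       + 4 * Klq u * Krq u + 2 * (Krq u)\<^sup>2) - (10 * u^2)\<^sup>2 / (8 * pi)"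
    unfolding mu_def P2_simps d_r2 d_F u_def by simp
  also have "2 / (1/u)\<^sup>2 = 2 * u^2" by (simp add: power_one_over)
  also have "(2 * u^2) * (1 - (Fq u)\<^sup>2 - 2 * (1/u) * (Fpq u * Vq u)) + 4 * Klq u * Krq u + 2 * (Krq u)\<^sup>2 = 200*u^4"
    using m by (simp add: mult.assoc)
  finally show ?thesis by (simp add: field_simps power2_eq_square power4_eq_xxxx)
qed

lemma J_P2: "Jmom P2 l = 0"
proof -
  define u where "u = uf l"
  have u: "0 < u" using uf_prop unfolding u_def by auto
  have j: "Klq u - Krq u = - u * Krpq u" using J0[OF u] .
  have "Jmom P2 l = (1 / (8 * pi)) * (2 * (Fq u / (1/u)) * (Klq u - Krq u) - 2 * (Krpq u * Vq u))"
    unfolding Jmom_def P2_simps d_r2 d_Kr u_def by simp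
  also have "\<dots> = 0" unfolding j Vq_def using u by (simp add: algebra_simps power2_eq_square)
  finally show ?thesis .
qed

lemma ms_P2: "ms_mass P2 l = 29/2 - 50 * uf l"
  unfolding ms_mass_def P2_simps d_r2 using ms0[OF uf_pos[of l]] by simp

lemma theta_P2: "theta_plus P2 l * theta_minus P2 l = 4 * (uf l)^2 * ((1 - 25 * uf l) * (1 - 4 * uf l))"
  unfolding theta_plus_def theta_minus_def P2_simps d_r2 using th0[OF uf_pos[of l]] by simp



abbreviation "DD \<equiv> [:0, 338, 6500:] :: real poly"
abbreviation "pVV \<equiv> [:0, 0, 0, -338, -1599, -36500, 250000:] :: real poly"

lemma DD_pos: "0 < x \<Longrightarrow> 0 < poly DD x"
proof -
  assume h: "0 < x"
  have "poly DD x = x * (338 + 6500*x)" by (simp add: algebra_simps)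
  also have "\<dots> > 0" using h by (intro mult_pos_pos) auto
  finally show ?thesis .
qed

lemma DD_ne: "0 < x \<Longrightarrow> poly DD x \<noteq> 0"
  using DD_pos by (metis less_irrefl)

lemma DD_ne2: "0 < x \<Longrightarrow> poly DD x ^ 2 \<noteq> 0"
  using DD_ne by simp

lemma DD_nz: "poly DD (uf l) \<noteq> 0"
  by (rule DD_ne[OF uf_pos])

lemma Vq_poly: "0 < x \<Longrightarrow> Vq x = poly pVV x / poly DD x"
proof -
  assume h: "0 < x"
  have "Vq x = -(x^2 * (338+1599*x+36500*x^2-250000*x^3)) / (26*(13+250*x))"
    unfolding Vq_def Fq_def by simp
  also have "\<dots> = poly pVV x / poly DD x"
    apply (rule div_eq_div)
    using h apply simp
    apply (rule DD_ne[OF h])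
    apply (simp add: algebra_simps power2_eq_square power3_eq_cube)
    done
  finally show ?thesis .
qed

lemma du_poly: "(uf has_real_derivative poly pVV (uf l) / poly DD (uf l)) (at l)"
  using uf_der[of l] Vq_poly[OF uf_pos[of l]] by simp

lemmas rfs = rf_smooth[of uf pVV DD, OF du_poly DD_nz]

lemma sm_r: "smooth_fun (\<lambda>l. 1 / uf l)"
proof -
  have e: "(\<lambda>l. 1 / uf l) = (\<lambda>l. poly [:338,6500:] (uf l) / poly DD (uf l) ^ 1)"
  proof (rule ext)
    fix l
    have h: "0 < uf l" by (rule uf_pos)
    show "1 / uf l = poly [:338,6500:] (uf l) / poly DD (uf l) ^ 1"
      apply (rule div_eq_div)
      using h apply simp
      apply (subst power_one_right, rule DD_ne[OF h])
      apply (simp add: algebra_simps)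
      done
  qed
  show ?thesis unfolding e by (rule rfs)
qed

lemma sm_Kr: "smooth_fun (\<lambda>l. Krq (uf l))"
proof -
  have e: "(\<lambda>l. Krq (uf l)) = (\<lambda>l. poly [:0,0,0,10049,36500,-250000:] (uf l) / poly DD (uf l) ^ 1)"
  proof (rule ext)
    fix l
    have h: "0 < uf l" by (rule uf_pos)
    have "Krq (uf l) = ((uf l)^2*(10049+36500*uf l-250000*(uf l)^2))/(26*(13+250*uf l))"
      unfolding Krq_def by simp
    also have "\<dots> = poly [:0,0,0,10049,36500,-250000:] (uf l) / poly DD (uf l) ^ 1"
      apply (rule div_eq_div)
      using h apply simp
      apply (subst power_one_right, rule DD_ne[OF h])
      apply (simp add: algebra_simps power2_eq_square power3_eq_cube)
      done
    finally show "Krq (uf l) = poly [:0,0,0,10049,36500,-250000:] (uf l) / poly DD (uf l) ^ 1" .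
  qed
  show ?thesis unfolding e by (rule rfs)
qed

lemma sm_Kl: "smooth_fun (\<lambda>l. Klq (uf l))"
proof -
  have e: "(\<lambda>l. Klq (uf l)) = (\<lambda>l. poly [:0,0,0,0,-3396562,-24674000,16250000,3250000000:] (uf l) / poly DD (uf l) ^ 2)"
  proof (rule ext)
    fix l
    have h: "0 < uf l" by (rule uf_pos)
    show "Klq (uf l) = poly [:0,0,0,0,-3396562,-24674000,16250000,3250000000:] (uf l) / poly DD (uf l) ^ 2"
      unfolding Klq_def
      apply (rule div_eq_div)
      using h apply simp
      apply (rule DD_ne2[OF h])
      apply (simp add: algebra_simps power_numeral_reduce)
      done
  qed
  show ?thesis unfolding e by (rule rfs)
qed

lemma sm_E: "smooth_fun (\<lambda>l. 10 * (uf l)^2)"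
proof -
  have e: "(\<lambda>l. 10 * (uf l)^2) = (\<lambda>l. poly [:0,0,10:] (uf l) / poly DD (uf l) ^ 0)"
    by (rule ext) (simp add: algebra_simps power2_eq_square)
  show ?thesis unfolding e by (rule rfs)
qed

lemma sm_id: "smooth_fun (\<lambda>l::real. l)"
proof -
  have "(\<lambda>l::real. l) = poly [:0,1:]" by (rule ext) simp
  then show ?thesis using poly_smooth by metis
qed

lemma sm_0: "smooth_fun (\<lambda>l::real. 0)"
proof -
  have "(\<lambda>l::real. 0) = poly 0" by (rule ext) simp
  then show ?thesis using poly_smooth by metis
qed

lemma Lf_R: "Lf (41/200) = 200/41"
  unfolding Lf_def kap_def by simp

lemma uf_R: "uf (200/41) = 41/200"
  using uf_Lf[of "41/200"] Lf_R by simp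

lemma uf_H: "uf (Lf (1/25)) = 1/25"
  by (rule uf_Lf) auto

lemma lh_gt: "200/41 < Lf (1/25)"
  using Lf_strict[of "1/25" "41/200"] Lf_R by simp



abbreviation "ls0 \<equiv> (200/41::real)"
abbreviation "lh0 \<equiv> Lf (1/25)"

lemma reg: "regular_up_to_shell ls0 P1 P2"
  unfolding regular_up_to_shell_def P1_simps P2_simps
  using sm_id sm_0 sm_r sm_Kl sm_Kr sm_E uf_pos
  by (simp add: d_id uf_R)

lemma af: "asymptotically_flat P2"
proof -
  have lim: "filterlim (\<lambda>l. 1 / uf l) at_top at_top"
    using filterlim_compose[OF filterlim_inverse_at_top_right uf_lim] by (simp add: inverse_eq_divide)
  obtain c1 where c1: "c1 > 0" "eventually (\<lambda>l. norm (Fq (uf l) - 1) \<le> c1 * norm (uf l)) at_top"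
    using landau_o.big.compose[OF a1 uf_lim] by (elim landau_o.bigE) auto
  obtain c2 where c2: "c2 > 0" "eventually (\<lambda>l. norm (Fpq (uf l) * Vq (uf l)) \<le> c2 * norm ((uf l)^2)) at_top"
    using landau_o.big.compose[OF a2 uf_lim] by (elim landau_o.bigE) auto
  obtain c3 where c3: "c3 > 0" "eventually (\<lambda>l. norm (Klpq (uf l) * Vq (uf l)) \<le> c3 * norm ((uf l)^3)) at_top"
    using landau_o.big.compose[OF a3 uf_lim] by (elim landau_o.bigE) auto
  obtain c4 where c4: "c4 > 0" "eventually (\<lambda>l. norm (Krpq (uf l) * Vq (uf l)) \<le> c4 * norm ((uf l)^3)) at_top"
    using landau_o.big.compose[OF a4 uf_lim] by (elim landau_o.bigE) auto
  obtain c5 where c5: "c5 > 0" "eventually (\<lambda>l. norm (Klq (uf l)) \<le> c5 * norm ((uf l)^2)) at_top"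
    using landau_o.big.compose[OF a5 uf_lim] by (elim landau_o.bigE) auto
  obtain c6 where c6: "c6 > 0" "eventually (\<lambda>l. norm (Krq (uf l)) \<le> c6 * norm ((uf l)^2)) at_top"
    using landau_o.big.compose[OF a6 uf_lim] by (elim landau_o.bigE) auto
  define C where "C = c1 + c2 + c3 + c4 + c5 + c6"
  have "eventually (\<lambda>l.
         \<bar>deriv (pr P2) l - 1\<bar> \<le> C / pr P2 l \<and>
         \<bar>deriv (deriv (pr P2)) l\<bar> \<le> C / (pr P2 l)\<^sup>2 \<and>
         \<bar>pKl P2 l\<bar> \<le> C / (pr P2 l)\<^sup>2 \<and> \<bar>pKr P2 l\<bar> \<le> C / (pr P2 l)\<^sup>2 \<and>
         \<bar>deriv (pKl P2) l\<bar> \<le> C / (pr P2 l)^3 \<and> \<bar>deriv (pKr P2) l\<bar> \<le> C / (pr P2 l)^3) at_top"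
    using c1(2) c2(2) c3(2) c4(2) c5(2) c6(2)
  proof eventually_elim
    case (elim l)
    define u where "u = uf l"
    have u: "0 < u" using uf_pos unfolding u_def by auto
    have e1: "C / (1/u) = C * u" "C / (1/u)^2 = C * u^2" "C / (1/u)^3 = C * u^3"
      using u by (simp_all add: power_one_over)
    have le: "c1 \<le> C" "c2 \<le> C" "c3 \<le> C" "c4 \<le> C" "c5 \<le> C" "c6 \<le> C"
      using c1(1) c2(1) c3(1) c4(1) c5(1) c6(1) unfolding C_def by linarith+
    have pu: "0 < u^2" "0 < u^3" using u by auto
    have b1: "\<bar>Fq u - 1\<bar> \<le> C * u"
    proof -
      have "\<bar>Fq u - 1\<bar> \<le> c1 * u" using elim(1) u unfolding u_def[symmetric] by simp
      moreover have "c1 * u \<le> C * u" using le(1) u by (intro mult_right_mono) auto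
      ultimately show ?thesis by linarith
    qed
    have b2: "\<bar>Fpq u * Vq u\<bar> \<le> C * u^2"
    proof -
      have "\<bar>Fpq u * Vq u\<bar> \<le> c2 * u^2" using elim(2) u unfolding u_def[symmetric] by simp
      moreover have "c2 * u^2 \<le> C * u^2" using le(2) u by (intro mult_right_mono) auto
      ultimately show ?thesis by linarith
    qed
    have b3: "\<bar>Klpq u * Vq u\<bar> \<le> C * u^3"
    proof -
      have "\<bar>Klpq u * Vq u\<bar> \<le> c3 * u^3" using elim(3) u unfolding u_def[symmetric] by simp
      moreover have "c3 * u^3 \<le> C * u^3" using le(3) u by (intro mult_right_mono) auto
      ultimately show ?thesis by linarith
    qed
    have b4: "\<bar>Krpq u * Vq u\<bar> \<le> C * u^3"
    proof -
      have "\<bar>Krpq u * Vq u\<bar> \<le> c4 * u^3" using elim(4) u unfolding u_def[symmetric] by simp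
      moreover have "c4 * u^3 \<le> C * u^3" using le(4) u by (intro mult_right_mono) auto
      ultimately show ?thesis by linarith
    qed
    have b5: "\<bar>Klq u\<bar> \<le> C * u^2"
    proof -
      have "\<bar>Klq u\<bar> \<le> c5 * u^2" using elim(5) u unfolding u_def[symmetric] by simp
      moreover have "c5 * u^2 \<le> C * u^2" using le(5) u by (intro mult_right_mono) auto
      ultimately show ?thesis by linarith
    qed
    have b6: "\<bar>Krq u\<bar> \<le> C * u^2"
    proof -
      have "\<bar>Krq u\<bar> \<le> c6 * u^2" using elim(6) u unfolding u_def[symmetric] by simp
      moreover have "c6 * u^2 \<le> C * u^2" using le(6) u by (intro mult_right_mono) auto
      ultimately show ?thesis by linarith
    qed
    have dd: "deriv (deriv (pr P2)) l = Fpq u * Vq u" unfolding P2_simps d_r2 d_F u_def ..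
    have dl: "deriv (pKl P2) l = Klpq u * Vq u" unfolding P2_simps d_Kl u_def ..
    have dr: "deriv (pKr P2) l = Krpq u * Vq u" unfolding P2_simps d_Kr u_def ..
    show ?case
      unfolding dd dl dr unfolding P2_simps d_r2 u_def[symmetric] e1
      using b1 b2 b3 b4 b5 b6 by simp
  qed
  then show ?thesis unfolding asymptotically_flat_def using lim P2_simps by auto
qed

lemma nts: "\<not> time_symmetric ls0 P1 P2"
proof -
  have "glue ls0 pKr P1 P2 lh0 = Krq (1/25)"
    unfolding glue_def P2_simps uf_H using lh_gt by simp
  moreover have "Krq (1/25) \<noteq> 0" unfolding Krq_def by (simp add: power_numeral_reduce)
  moreover have "lh0 \<ge> 0" using lh_gt by simp
  ultimately show ?thesis unfolding time_symmetric_def by auto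
qed

lemma nmax: "\<not> maximal ls0 P1 P2"
proof -
  have "glue ls0 pKl P1 P2 lh0 + 2 * glue ls0 pKr P1 P2 lh0 = Klq (1/25) + 2 * Krq (1/25)"
    unfolding glue_def P2_simps uf_H using lh_gt by simp
  moreover have "Klq (1/25) + 2 * Krq (1/25) \<noteq> 0" unfolding Krq_def Klq_def by (simp add: power_numeral_reduce)
  moreover have "lh0 \<ge> 0" using lh_gt by simp
  ultimately show ?thesis unfolding maximal_def by auto
qed

lemma mu_P1: "mu P1 l = 0"
  unfolding mu_def P1_simps d_id d_const by simp

lemma J_P1: "Jmom P1 l = 0"
  unfolding Jmom_def P1_simps d_const by simp

lemma dec: "dominant_energy ls0 P1 P2"
proof -
  have sh: "(200/41) * \<bar>Krq (41/200) - 0\<bar> \<le> - (Fq (41/200) - 1)"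
    unfolding Krq_def Fq_def by (simp add: power2_eq_square power3_eq_cube)
  show ?thesis
    unfolding dominant_energy_def
    using sh by (simp add: mu_P1 J_P1 mu_P2 J_P2 P1_simps P2_simps d_r2 d_id uf_R)
qed

lemma ev: "electrovac_outside ls0 P1 P2 ls0 10"
  unfolding electrovac_outside_def
  by (simp add: mu_P2 J_P2 P2_simps power_one_over)

lemma mass: "((\<lambda>l. ms_mass P2 l) \<longlongrightarrow> 29/2) at_top"
proof -
  have t: "(uf \<longlongrightarrow> 0) at_top" using uf_lim unfolding filterlim_at by simp
  have "((\<lambda>l. 29/2 - 50 * uf l) \<longlongrightarrow> 29/2 - 50 * 0) at_top"
    by (intro tendsto_intros t)
  then show ?thesis unfolding ms_P2 by simp
qed

lemma tp: "l > ls0 \<Longrightarrow> theta_prod ls0 P1 P2 l = 4 * (uf l)^2 * ((1 - 25 * uf l) * (1 - 4 * uf l))"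
  unfolding theta_prod_def glue_def using theta_P2 by simp

lemma hor: "horizon_at ls0 P1 P2 lh0"
  unfolding horizon_at_def
proof (intro conjI exI[of _ "lh0 - ls0"])
  show "theta_prod ls0 P1 P2 lh0 = 0" using tp[OF lh_gt] uf_H by simp
  show "lh0 - ls0 > 0" using lh_gt by simp
  show "\<forall>l. lh0 - (lh0 - ls0) < l \<and> l < lh0 \<longrightarrow> theta_prod ls0 P1 P2 l < 0"
  proof (intro allI impI)
    fix l assume l: "lh0 - (lh0 - ls0) < l \<and> l < lh0"
    have a: "uf l > 1/25" using uf_strict[of l lh0] l uf_H by simp
    have b: "uf l < 41/200" using uf_strict[of ls0 l] l uf_R by simp
    have "(1 - 25 * uf l) * (1 - 4 * uf l) < 0" using a b by (intro mult_neg_pos) auto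
    moreover have "0 < 4 * (uf l)^2" using uf_pos[of l] by simp
    ultimately show "theta_prod ls0 P1 P2 l < 0" using tp[of l] l
      by (simp add: mult_pos_neg)
  qed
  show "\<forall>l. lh0 < l \<and> l < lh0 + (lh0 - ls0) \<longrightarrow> 0 \<le> theta_prod ls0 P1 P2 l"
  proof (intro allI impI)
    fix l assume l: "lh0 < l \<and> l < lh0 + (lh0 - ls0)"
    have a: "uf l < 1/25" using uf_strict[of lh0 l] l uf_H by simp
    have "0 \<le> (1 - 25 * uf l) * (1 - 4 * uf l)" using a by (intro mult_nonneg_nonneg) auto
    moreover have "0 \<le> 4 * (uf l)^2" by simp
    moreover have "l > ls0" using l lh_gt by simp
    ultimately show "0 \<le> theta_prod ls0 P1 P2 l" using tp[of l] by simp
  qed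
qed

lemma rh: "pr P2 lh0 = 29/2 + sqrt ((29/2)\<^sup>2 - 10\<^sup>2)"
proof -
  have "(29/2::real)\<^sup>2 - 10\<^sup>2 = (21/2)\<^sup>2" by (simp add: power2_eq_square)
  then have "sqrt ((29/2::real)\<^sup>2 - 10\<^sup>2) = 21/2" by simp
  then show ?thesis unfolding P2_simps uf_H by simp
qed

theorem theorem1:
  shows "\<exists>(ls::real) (p1::piece) (p2::piece) (l0::real) (Q::real) (M::real) (lh::real).
     regular_up_to_shell ls p1 p2 \<and>
     asymptotically_flat p2 \<and>
     \<not> time_symmetric ls p1 p2 \<and> \<not> maximal ls p1 p2 \<and>
     dominant_energy ls p1 p2 \<and>
     electrovac_outside ls p1 p2 l0 Q \<and>
     ((\<lambda>l. ms_mass p2 l) \<longlongrightarrow> M) at_top \<and>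
     M > \<bar>Q\<bar> \<and>
     l0 < lh \<and> horizon_at ls p1 p2 lh \<and>
     pr p2 lh = M + sqrt (M\<^sup>2 - Q\<^sup>2) \<and>
     2 * pr p2 l0 < \<bar>Q\<bar>"
proof (intro exI conjI)
  show "regular_up_to_shell ls0 P1 P2" by (rule reg)
  show "asymptotically_flat P2" by (rule af)
  show "\<not> time_symmetric ls0 P1 P2" by (rule nts)
  show "\<not> maximal ls0 P1 P2" by (rule nmax)
  show "dominant_energy ls0 P1 P2" by (rule dec)
  show "electrovac_outside ls0 P1 P2 ls0 10" by (rule ev)
  show "((\<lambda>l. ms_mass P2 l) \<longlongrightarrow> 29/2) at_top" by (rule mass)
  show "29/2 > \<bar>10::real\<bar>" by simp
  show "ls0 < lh0" by (rule lh_gt)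
  show "horizon_at ls0 P1 P2 lh0" by (rule hor)
  show "pr P2 lh0 = 29/2 + sqrt ((29/2)\<^sup>2 - 10\<^sup>2)" by (rule rh)
  show "2 * pr P2 ls0 < \<bar>10::real\<bar>" unfolding P2_simps uf_R by simp
qed


end
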